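(* Let $k\ge6$ be an integer and $\alpha>\beta>0$. Then $$ (N'_{-1},N'_1)\subset(N_{-1},N_1)\subset(\delta_{-1},\delta_1). $$
   Context: Put $r=2k+\alpha+\beta+1$, $q=(\alpha-\beta)/r$, $s=(\alpha+\beta)/r$, and let $\omega,\tau,\tau'\in(0,\pi/2)$ be given by $\sin\omega=q$, $\sin\tau=s$, $\sin\tau'=\frac{\alpha+\beta+1}{2k+\alpha+\beta+1}$. For $j=\pm1$ let $\delta_j=j\cos(\tau+j\omega)$, $$N'_j=j\left(\cos(\tau'+j\omega)-\frac{3}{10}\left(\frac{\sin^4(\tau'+j\omega)}{2\cos\tau'\cos\omega}\right)^{1/3}r^{-2/3}\right),$$ $$N_j=j\left(\cos(\tau+j\omega)-\frac{5}{17}\left(\frac{\sin^4(\tau+j\omega)}{2\cos\tau\cos\omega}\right)^{1/3}r^{-2/3}\right).$$ *)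

theory Defs
  imports Complex_Main
begin

definition rr :: "nat \<Rightarrow> real \<Rightarrow> real \<Rightarrow> real" where
  "rr k \<alpha> \<beta> = 2 * real k + \<alpha> + \<beta> + 1"

definition omg :: "nat \<Rightarrow> real \<Rightarrow> real \<Rightarrow> real" where
  "omg k \<alpha> \<beta> = arcsin ((\<alpha> - \<beta>) / rr k \<alpha> \<beta>)"

definition tau :: "nat \<Rightarrow> real \<Rightarrow> real \<Rightarrow> real" where
  "tau k \<alpha> \<beta> = arcsin ((\<alpha> + \<beta>) / rr k \<alpha> \<beta>)"

definition tau' :: "nat \<Rightarrow> real \<Rightarrow> real \<Rightarrow> real" where
  "tau' k \<alpha> \<beta> = arcsin ((\<alpha> + \<beta> + 1) / (2 * real k + \<alpha> + \<beta> + 1))"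

definition delta :: "int \<Rightarrow> nat \<Rightarrow> real \<Rightarrow> real \<Rightarrow> real" where
  "delta j k \<alpha> \<beta> = of_int j * cos (tau k \<alpha> \<beta> + of_int j * omg k \<alpha> \<beta>)"

definition N' :: "int \<Rightarrow> nat \<Rightarrow> real \<Rightarrow> real \<Rightarrow> real" where
  "N' j k \<alpha> \<beta> = of_int j *
     (cos (tau' k \<alpha> \<beta> + of_int j * omg k \<alpha> \<beta>)
      - 3/10 * root 3 (sin (tau' k \<alpha> \<beta> + of_int j * omg k \<alpha> \<beta>) ^ 4
                       / (2 * cos (tau' k \<alpha> \<beta>) * cos (omg k \<alpha> \<beta>)))
            * rr k \<alpha> \<beta> powr (-2/3))"

definition N :: "int \<Rightarrow> nat \<Rightarrow> real \<Rightarrow> real \<Rightarrow> real" where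
  "N j k \<alpha> \<beta> = of_int j *
     (cos (tau k \<alpha> \<beta> + of_int j * omg k \<alpha> \<beta>)
      - 5/17 * root 3 (sin (tau k \<alpha> \<beta> + of_int j * omg k \<alpha> \<beta>) ^ 4
                       / (2 * cos (tau k \<alpha> \<beta>) * cos (omg k \<alpha> \<beta>)))
            * rr k \<alpha> \<beta> powr (-2/3))"

end

theory Submission
  imports Defs
begin

lemma root_cmp:
  fixes X X' :: real
  assumes "0 \<le> X" "(5/17)^3 * X \<le> 27/1000 * X'"
  shows "5/17 * root 3 X \<le> 3/10 * root 3 X'"
proof -
  have a: "root 3 ((5/17)^3) = (5/17::real)" by (rule real_root_power_cancel) auto
  have b: "root 3 (27/1000) = (3/10::real)"
    using real_root_power_cancel[of 3 "3/10::real"] by (simp add: power3_eq_cube)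
  have "5/17 * root 3 X = root 3 ((5/17)^3 * X)" using a by (simp add: real_root_mult)
  also have "\<dots> \<le> root 3 (27/1000 * X')" using assms(2) by simp
  also have "\<dots> = 3/10 * root 3 X'" by (simp only: real_root_mult b)
  finally show ?thesis .
qed

lemma lin96: "0 \<le> (x::real) \<Longrightarrow> 12 * x \<le> 13 * y \<Longrightarrow> 9216 / 10000 * x \<le> y"
  by linarith

lemma core_plus:
  fixes s s' q C C' Q :: real
  assumes q0: "0 < q" and qs: "q < s" and ss: "s \<le> s'"
    and Cp: "C > 0" and C'p: "C' > 0" and Qp: "Q > 0"
    and C2: "C^2 = 1 - s^2" and C'2: "C'^2 = 1 - s'^2" and Q2: "Q^2 = 1 - q^2"
    and h13: "12 * (1 - s^2) \<le> 13 * (1 - s'^2)"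
  shows "(5/17)^3 * C' * (s*Q + C*q)^4 \<le> 27/1000 * C * (s'*Q + C'*q)^4"
proof -
  define P where "P = s*Q + C*q"
  define P' where "P' = s'*Q + C'*q"
  have "(C*q)^2 \<le> (s*Q)^2"
  proof -
    have "(C*q)^2 = (1-s^2)*q^2" by (simp add: power_mult_distrib C2)
    also have "\<dots> \<le> s^2*(1-q^2)"
    proof -
      have "q^2 \<le> s^2" using q0 qs by (simp add: power_mono)
      then show ?thesis by (simp add: algebra_simps)
    qed
    also have "\<dots> = (s*Q)^2" by (simp add: power_mult_distrib Q2)
    finally show ?thesis .
  qed
  moreover have "0 \<le> s*Q" using q0 qs Qp by simp
  ultimately have Cq: "C*q \<le> s*Q" by (rule power2_le_imp_le)
  have Pp: "P > 0" unfolding P_def using q0 qs Qp Cp by (simp add: add_pos_pos)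
  have CC: "C' \<le> C"
  proof -
    have "s^2 \<le> s'^2" using ss q0 qs by (intro power_mono) auto
    hence "C'^2 \<le> C^2" using C2 C'2 by linarith
    moreover have "0 \<le> C" using Cp by simp
    ultimately show ?thesis by (rule power2_le_imp_le)
  qed
  have P'ge: "P' \<ge> P - (C - C')*q"
  proof -
    have "(s'-s)*Q \<ge> 0" using ss Qp by simp
    moreover have "P' - (P - (C - C')*q) = (s'-s)*Q" unfolding P_def P'_def by (simp add: algebra_simps)
    ultimately show ?thesis by linarith
  qed
  have "2*C*((C - C')*q) \<le> (C - C')*P"
  proof -
    have "2*C*q \<le> P" using Cq unfolding P_def by simp
    moreover have "0 \<le> C - C'" using CC by simp
    ultimately have "(C - C')*(2*C*q) \<le> (C - C')*P" by (rule mult_left_mono)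
    thus ?thesis by (simp add: algebra_simps)
  qed
  moreover have "2*C*P' \<ge> 2*C*(P - (C - C')*q)" using P'ge Cp by simp
  ultimately have key: "2*C*P' \<ge> P*(C + C')" by (simp add: algebra_simps)
  have tang: "(C + C')^4 \<ge> 32*C^3*C' - 16*C^4"
  proof -
    have "(C + C')^4 - (32*C^3*C' - 16*C^4) = (C'-C)^2*((C'-C+4*C)^2 + 8*C^2)"
      by (simp add: algebra_simps power2_eq_square power3_eq_cube power4_eq_xxxx)
    moreover have "(C'-C)^2*((C'-C+4*C)^2 + 8*C^2) \<ge> 0" by simp
    ultimately show ?thesis by linarith
  qed
  have "(P*(C + C'))^4 \<le> (2*C*P')^4"
    by (rule power_mono[OF key]) (use Pp Cp C'p in simp)
  hence "P^4 * (C + C')^4 \<le> 16 * C^4 * P'^4" by (simp add: power_mult_distrib)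
  moreover have "P^4 * (32*C^3*C' - 16*C^4) \<le> P^4 * (C + C')^4" by (rule mult_left_mono[OF tang]) simp
  ultimately have "P^4 * (32*C^3*C' - 16*C^4) \<le> 16 * C^4 * P'^4" by linarith
  moreover have "P^4 * (32*C^3*C' - 16*C^4) = 16*C^3 * (P^4 * (2*C' - C))"
    by (simp add: algebra_simps power4_eq_xxxx power3_eq_cube)
  moreover have "16 * C^4 * P'^4 = 16*C^3 * (C * P'^4)"
    by (simp add: power4_eq_xxxx power3_eq_cube)
  ultimately have "16*C^3 * (P^4 * (2*C' - C)) \<le> 16*C^3 * (C * P'^4)" by simp
  hence st: "P^4 * (2*C' - C) \<le> C * P'^4" using Cp by simp
  have e96: "(96/100*C)^2 = 9216/10000 * C^2" by (simp add: power2_eq_square)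
  have "C^2 \<ge> 0" by simp
  hence "0 \<le> 1 - s^2" using C2 by simp
  hence "9216/10000 * (1 - s^2) \<le> 1 - s'^2" using h13 by (rule lin96)
  hence "9216/10000 * C^2 \<le> C'^2" unfolding C2 C'2 .
  hence "(96/100*C)^2 \<le> C'^2" using e96 by simp
  hence c96: "96/100*C \<le> C'" by (rule power2_le_imp_le) (use C'p in simp)
  have "(5/17)^3 * C' * P^4 \<le> 27/1000 * (P^4 * (2*C' - C))"
  proof -
    have e: "(5/17::real)^3 = 125/4913" by (simp add: power3_eq_cube)
    have "125/4913 * C' \<le> 54/1000 * C' - 27/1000 * C" using c96 Cp by linarith
    hence "125/4913 * C' \<le> 27/1000 * (2*C' - C)" by (simp add: right_diff_distrib)
    hence "(5/17)^3 * C' \<le> 27/1000 * (2*C' - C)" by (simp only: e)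
    from mult_right_mono[OF this, of "P^4"] show ?thesis by (simp only: ac_simps zero_le_power_eq_numeral even_numeral) simp
  qed
  also have "\<dots> \<le> 27/1000 * (C * P'^4)" using st by simp
  finally show ?thesis unfolding P_def P'_def by (simp add: mult.assoc)
qed

lemma core_minus:
  fixes s s' q C C' Q :: real
  assumes q0: "0 < q" and qs: "q < s" and ss: "s \<le> s'"
    and Cp: "C > 0" and C'p: "C' > 0" and Qp: "Q > 0"
    and C2: "C^2 = 1 - s^2" and C'2: "C'^2 = 1 - s'^2" and Q2: "Q^2 = 1 - q^2"
  shows "(5/17)^3 * C' * (s*Q - C*q)^4 \<le> 27/1000 * C * (s'*Q - C'*q)^4"
proof -
  have "(C*q)^2 \<le> (s*Q)^2"
  proof -
    have "(C*q)^2 = (1-s^2)*q^2" by (simp add: power_mult_distrib C2)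
    also have "\<dots> \<le> s^2*(1-q^2)"
    proof -
      have "q^2 \<le> s^2" using q0 qs by (simp add: power_mono)
      then show ?thesis by (simp add: algebra_simps)
    qed
    also have "\<dots> = (s*Q)^2" by (simp add: power_mult_distrib Q2)
    finally show ?thesis .
  qed
  moreover have "0 \<le> s*Q" using q0 qs Qp by simp
  ultimately have Cq: "C*q \<le> s*Q" by (rule power2_le_imp_le)
  have CC: "C' \<le> C"
  proof -
    have "s^2 \<le> s'^2" using ss q0 qs by (intro power_mono) auto
    hence "C'^2 \<le> C^2" using C2 C'2 by linarith
    moreover have "0 \<le> C" using Cp by simp
    ultimately show ?thesis by (rule power2_le_imp_le)
  qed
  have a: "0 \<le> s*Q - C*q" using Cq by simp
  have "s*Q \<le> s'*Q" using ss Qp by simp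
  moreover have "C'*q \<le> C*q" using CC q0 by simp
  ultimately have b: "s*Q - C*q \<le> s'*Q - C'*q" by linarith
  have c: "(s*Q - C*q)^4 \<le> (s'*Q - C'*q)^4" by (rule power_mono[OF b a])
  have d: "(5/17)^3 * C' \<le> 27/1000 * C"
  proof -
    have e: "(5/17::real)^3 = 125/4913" by (simp add: power3_eq_cube)
    have "125/4913 * C' \<le> 27/1000 * C" using CC C'p by linarith
    thus ?thesis by (simp only: e)
  qed
  have "(5/17)^3 * C' * (s*Q - C*q)^4 \<le> 27/1000 * C * (s'*Q - C'*q)^4"
    by (rule mult_mono[OF d c]) (use Cp in simp_all)
  thus ?thesis .
qed

lemma X_cmp:
  fixes C C' Q P P' :: real
  assumes "C > 0" "C' > 0" "Q > 0" "(5/17)^3*C'*P^4 \<le> 27/1000*C*P'^4"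
  shows "(5/17)^3*(P^4/(2*C*Q)) \<le> 27/1000*(P'^4/(2*C'*Q))"
proof -
  have "(5/17)^3*(P^4/(2*C*Q)) = ((5/17)^3*C'*P^4)/(2*C*C'*Q)" using assms by (simp add: field_simps)
  also have "\<dots> \<le> (27/1000*C*P'^4)/(2*C*C'*Q)" using assms by (intro divide_right_mono) auto
  also have "\<dots> = 27/1000*(P'^4/(2*C'*Q))" using assms by (simp add: field_simps)
  finally show ?thesis .
qed

lemma corr_cmp:
  fixes C C' Q P P' \<rho> :: real
  assumes "C > 0" "C' > 0" "Q > 0" "\<rho> \<ge> 0" "(5/17)^3*C'*P^4 \<le> 27/1000*C*P'^4"
  shows "5/17 * root 3 (P^4/(2*C*Q)) * \<rho> \<le> 3/10 * root 3 (P'^4/(2*C'*Q)) * \<rho>"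
proof -
  have "5/17 * root 3 (P^4/(2*C*Q)) \<le> 3/10 * root 3 (P'^4/(2*C'*Q))"
    by (rule root_cmp) (use assms X_cmp in auto)
  thus ?thesis using assms(4) by (rule mult_right_mono)
qed


lemma asin_facts:
  fixes x :: real
  assumes "0 < x" "x < 1"
  shows "sin (arcsin x) = x" "cos (arcsin x) = sqrt (1 - x^2)" "sqrt (1 - x^2) > 0"
    "(sqrt (1 - x^2))^2 = 1 - x^2" "0 < arcsin x" "arcsin x \<le> pi/2"
proof -
  have x2: "x^2 < 1" using assms by (simp add: power_less_one_iff abs_square_less_1)
  show "sin (arcsin x) = x" using assms by simp
  show "cos (arcsin x) = sqrt (1 - x^2)" using assms by (intro cos_arcsin) auto
  show "sqrt (1 - x^2) > 0" using x2 by simp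
  show "(sqrt (1 - x^2))^2 = 1 - x^2" using x2 by simp
  show "0 < arcsin x" using arcsin_less_arcsin[of 0 x] assms by simp
  show "arcsin x \<le> pi/2" using assms by (intro arcsin_ubound) auto
qed

theorem lemma10:
  fixes k :: nat and \<alpha> \<beta> :: real
  assumes "k \<ge> 6" and "\<alpha> > \<beta>" and "\<beta> > 0"
  shows "{N' (-1) k \<alpha> \<beta> <..< N' 1 k \<alpha> \<beta>} \<subseteq> {N (-1) k \<alpha> \<beta> <..< N 1 k \<alpha> \<beta>}
       \<and> {N (-1) k \<alpha> \<beta> <..< N 1 k \<alpha> \<beta>} \<subseteq> {delta (-1) k \<alpha> \<beta> <..< delta 1 k \<alpha> \<beta>}"
proof -
  define r where "r = rr k \<alpha> \<beta>"
  have r_eq: "r = 2 * real k + \<alpha> + \<beta> + 1" unfolding r_def rr_def by simp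
  have rp: "r > 0" using r_eq assms by simp
  define \<rho> where "\<rho> = r powr (-2/3)"
  have \<rho>0: "\<rho> \<ge> 0" unfolding \<rho>_def by simp
  define s where "s = (\<alpha> + \<beta>) / r"
  define q where "q = (\<alpha> - \<beta>) / r"
  define s' where "s' = (\<alpha> + \<beta> + 1) / r"
  have q0: "0 < q" unfolding q_def using assms rp by simp
  have qs: "q < s" unfolding q_def s_def using assms rp by (intro divide_strict_right_mono) auto
  have ss: "s < s'" unfolding s'_def s_def using assms rp by (intro divide_strict_right_mono) auto
  have s'1: "s' < 1" unfolding s'_def using assms rp r_eq by simp
  have s1: "s < 1" using ss s'1 by simp
  have q1: "q < 1" using qs s1 by simp
  have s0: "0 < s" using q0 qs by simp
  have s'0: "0 < s'" using s0 ss by simp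
  have h13: "12 * (1 - s^2) \<le> 13 * (1 - s'^2)"
  proof -
    have a: "1 - s = (2 * real k + 1) / r" unfolding s_def using rp r_eq by (simp add: field_simps)
    have b: "1 - s' = (2 * real k) / r" unfolding s'_def using rp r_eq by (simp add: field_simps)
    have "12 * (1 - s) \<le> 13 * (1 - s')" unfolding a b using rp assms(1)
      by (simp add: divide_right_mono)
    moreover have "1 + s \<le> 1 + s'" using ss by simp
    ultimately have "12 * (1 - s) * (1 + s) \<le> 13 * (1 - s') * (1 + s')"
      by (rule mult_mono) (use s'1 s0 in auto)
    thus ?thesis by (simp add: power2_eq_square algebra_simps)
  qed
  define \<tau> where "\<tau> = tau k \<alpha> \<beta>"
  define \<tau>' where "\<tau>' = tau' k \<alpha> \<beta>"
  define \<omega> where "\<omega> = omg k \<alpha> \<beta>"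
  have \<tau>s: "\<tau> = arcsin s" unfolding \<tau>_def tau_def s_def r_def ..
  have \<tau>'s: "\<tau>' = arcsin s'" unfolding \<tau>'_def tau'_def s'_def r_eq ..
  have \<omega>q: "\<omega> = arcsin q" unfolding \<omega>_def omg_def q_def r_def ..
  define C where "C = sqrt (1 - s^2)"
  define C' where "C' = sqrt (1 - s'^2)"
  define Q where "Q = sqrt (1 - q^2)"
  note fs = asin_facts[OF s0 s1] note fs' = asin_facts[OF s'0 s'1] note fq = asin_facts[OF q0 q1]
  have Cp: "C > 0" and C'p: "C' > 0" and Qp: "Q > 0"
    using fs fs' fq unfolding C_def C'_def Q_def by auto
  have C2: "C^2 = 1 - s^2" and C'2: "C'^2 = 1 - s'^2" and Q2: "Q^2 = 1 - q^2"
    using fs fs' fq unfolding C_def C'_def Q_def by auto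
  have sin\<tau>: "sin \<tau> = s" and cos\<tau>: "cos \<tau> = C" using fs unfolding \<tau>s C_def by auto
  have sin\<tau>': "sin \<tau>' = s'" and cos\<tau>': "cos \<tau>' = C'" using fs' unfolding \<tau>'s C'_def by auto
  have sin\<omega>: "sin \<omega> = q" and cos\<omega>: "cos \<omega> = Q" using fq unfolding \<omega>q Q_def by auto
  have \<omega>\<tau>: "\<omega> < \<tau>" unfolding \<omega>q \<tau>s using qs q0 s1 by (intro arcsin_less_arcsin) auto
  have \<tau>\<tau>': "\<tau> < \<tau>'" unfolding \<tau>'s \<tau>s using ss s0 s'1 by (intro arcsin_less_arcsin) auto
  have \<omega>0: "0 < \<omega>" using fq unfolding \<omega>q by auto
  have \<tau>'b: "\<tau>' \<le> pi/2" using fs' unfolding \<tau>'s by auto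
  have \<omega>b: "\<omega> \<le> pi/2" using fq unfolding \<omega>q by auto
  have cosp: "cos (\<tau>' + \<omega>) \<le> cos (\<tau> + \<omega>)"
    by (rule cos_monotone_0_pi_le) (use \<omega>\<tau> \<tau>\<tau>' \<omega>0 \<tau>'b \<omega>b in auto)
  have cosm: "cos (\<tau>' - \<omega>) \<le> cos (\<tau> - \<omega>)"
    by (rule cos_monotone_0_pi_le) (use \<omega>\<tau> \<tau>\<tau>' \<omega>0 \<tau>'b \<omega>b in auto)
  have sp: "sin (\<tau> + \<omega>) = s*Q + C*q" by (simp add: sin_add sin\<tau> cos\<tau> sin\<omega> cos\<omega> mult.commute)
  have sp': "sin (\<tau>' + \<omega>) = s'*Q + C'*q" by (simp add: sin_add sin\<tau>' cos\<tau>' sin\<omega> cos\<omega> mult.commute)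
  have sm: "sin (\<tau> - \<omega>) = s*Q - C*q" by (simp add: sin_diff sin\<tau> cos\<tau> sin\<omega> cos\<omega> mult.commute)
  have sm': "sin (\<tau>' - \<omega>) = s'*Q - C'*q" by (simp add: sin_diff sin\<tau>' cos\<tau>' sin\<omega> cos\<omega> mult.commute)
  have N1: "N 1 k \<alpha> \<beta> = cos (\<tau> + \<omega>) - 5/17 * root 3 ((s*Q + C*q)^4 / (2*C*Q)) * \<rho>"
    unfolding N_def by (simp add: \<tau>_def[symmetric] \<omega>_def[symmetric] r_def[symmetric] \<rho>_def sp cos\<tau> cos\<omega>)
  have N'1: "N' 1 k \<alpha> \<beta> = cos (\<tau>' + \<omega>) - 3/10 * root 3 ((s'*Q + C'*q)^4 / (2*C'*Q)) * \<rho>"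
    unfolding N'_def by (simp add: \<tau>'_def[symmetric] \<omega>_def[symmetric] r_def[symmetric] \<rho>_def sp' cos\<tau>' cos\<omega>)
  have Nm: "N (-1) k \<alpha> \<beta> = - (cos (\<tau> - \<omega>) - 5/17 * root 3 ((s*Q - C*q)^4 / (2*C*Q)) * \<rho>)"
    unfolding N_def by (simp add: \<tau>_def[symmetric] \<omega>_def[symmetric] r_def[symmetric] \<rho>_def sm cos\<tau> cos\<omega>)
  have N'm: "N' (-1) k \<alpha> \<beta> = - (cos (\<tau>' - \<omega>) - 3/10 * root 3 ((s'*Q - C'*q)^4 / (2*C'*Q)) * \<rho>)"
    unfolding N'_def by (simp add: \<tau>'_def[symmetric] \<omega>_def[symmetric] r_def[symmetric] \<rho>_def sm' cos\<tau>' cos\<omega>)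
  have d1: "delta 1 k \<alpha> \<beta> = cos (\<tau> + \<omega>)"
    unfolding delta_def by (simp add: \<tau>_def[symmetric] \<omega>_def[symmetric])
  have dm: "delta (-1) k \<alpha> \<beta> = - cos (\<tau> - \<omega>)"
    unfolding delta_def by (simp add: \<tau>_def[symmetric] \<omega>_def[symmetric])
  have cp: "5/17 * root 3 ((s*Q + C*q)^4 / (2*C*Q)) * \<rho> \<le> 3/10 * root 3 ((s'*Q + C'*q)^4 / (2*C'*Q)) * \<rho>"
    by (rule corr_cmp[OF Cp C'p Qp \<rho>0 core_plus[OF q0 qs _ Cp C'p Qp C2 C'2 Q2 h13]]) (use ss in simp)
  have cm: "5/17 * root 3 ((s*Q - C*q)^4 / (2*C*Q)) * \<rho> \<le> 3/10 * root 3 ((s'*Q - C'*q)^4 / (2*C'*Q)) * \<rho>"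
    by (rule corr_cmp[OF Cp C'p Qp \<rho>0 core_minus[OF q0 qs _ Cp C'p Qp C2 C'2 Q2]]) (use ss in simp)
  have nn1: "0 \<le> 5/17 * root 3 ((s*Q + C*q)^4 / (2*C*Q)) * \<rho>"
    using Cp Qp \<rho>0 by simp
  have nn2: "0 \<le> 5/17 * root 3 ((s*Q - C*q)^4 / (2*C*Q)) * \<rho>"
    using Cp Qp \<rho>0 by simp
  have i1: "N' 1 k \<alpha> \<beta> \<le> N 1 k \<alpha> \<beta>" unfolding N1 N'1 using cosp cp by linarith
  have i2: "N (-1) k \<alpha> \<beta> \<le> N' (-1) k \<alpha> \<beta>" unfolding Nm N'm using cosm cm by linarith
  have i3: "N 1 k \<alpha> \<beta> \<le> delta 1 k \<alpha> \<beta>" unfolding N1 d1 using nn1 by linarith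
  have i4: "delta (-1) k \<alpha> \<beta> \<le> N (-1) k \<alpha> \<beta>" unfolding Nm dm using nn2 by linarith
  show ?thesis using i1 i2 i3 i4 by auto
qed

end
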